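(* For $n,m\ge0$, let $S_{n,m}$ be the signed graph obtained from disjoint copies of the star graphs $S_n$ and $S_m$ by joining their center vertices with a negative edge. Then $$X_{S_{n,m}}=\sum_{i=0}^{n}\sum_{j=0}^{m}\binom{n}{i}\binom{m}{j}(-1)^{i+j}p_{1,0}^{n+m-i-j}\bigl(p_{i+1,0}p_{j+1,0}-p_{i+1,j+1}\bigr).$$
   Context: $S_k$ ($k\ge0$) is the star signed graph with $k+1$ vertices: a center vertex joined by $k$ positive edges to $k$ other vertices. For a signed graph $\Sigma$ (finite graph with edge signs in $\{+,-\}$), a coloring $\kappa:V(\Sigma)\to\mathbb{Z}$ is proper if $\kappa(u)\ne\mathrm{sgn}(e)\kappa(v)$ for every edge $e$ with endpoints $u,v$, and $X_\Sigma=\sum_{\kappa\text{ proper}}\prod_{v}x_{\kappa(v)}$ in commuting variables $x_i$, $i\in\mathbb{Z}$. $p_{a,b}=\sum_{i\in\mathbb{Z}}x_i^ax_{-i}^b$. *)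

theory Defs
  imports Main "HOL-Library.FuncSet" "HOL-Library.Poly_Mapping"
begin

text \<open>Formal power series in the commuting variables x_i (i in Z) with integer
coefficients, represented by their coefficient functions: a monomial
prod_i x_i^(alpha i) is a finitely supported exponent map alpha :: int =>0 nat.\<close>

type_synonym msf = "(int \<Rightarrow>\<^sub>0 nat) \<Rightarrow> int"

definition msf_one :: msf where
  "msf_one \<alpha> = (if \<alpha> = 0 then 1 else 0)"

text \<open>Cauchy product; the index set is finite since beta + gamma = alpha.\<close>
definition msf_mult :: "msf \<Rightarrow> msf \<Rightarrow> msf" where
  "msf_mult f g \<alpha> = (\<Sum>(\<beta>, \<gamma>) \<in> {(\<beta>, \<gamma>). \<beta> + \<gamma> = \<alpha>}. f \<beta> * g \<gamma>)"

primrec msf_pow :: "msf \<Rightarrow> nat \<Rightarrow> msf" where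
  "msf_pow f 0 = msf_one"
| "msf_pow f (Suc k) = msf_mult f (msf_pow f k)"

text \<open>Power sum p_{a,b} = sum_{i in Z} x_i^a x_{-i}^b.\<close>
definition pab :: "nat \<Rightarrow> nat \<Rightarrow> msf" where
  "pab a b \<alpha> = int (card {i::int. \<alpha> = Poly_Mapping.single i a + Poly_Mapping.single (- i) b})"

text \<open>A signed graph: finite vertex set and a set of edges (u, v, sign),
sign True = positive, False = negative.\<close>
type_synonym 'v sgraph = "'v set \<times> ('v \<times> 'v \<times> bool) set"

definition proper_col :: "'v sgraph \<Rightarrow> ('v \<Rightarrow> int) \<Rightarrow> bool" where
  "proper_col G \<kappa> \<longleftrightarrow> (\<forall>(u, v, s) \<in> snd G. \<kappa> u \<noteq> (if s then \<kappa> v else - \<kappa> v))"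

definition proper_colorings :: "'v sgraph \<Rightarrow> ('v \<Rightarrow> int) set" where
  "proper_colorings G = {\<kappa> \<in> fst G \<rightarrow>\<^sub>E (UNIV :: int set). proper_col G \<kappa>}"

definition chrom_sym :: "'v sgraph \<Rightarrow> msf" where
  "chrom_sym G \<alpha> = int (card {\<kappa> \<in> proper_colorings G.
        \<forall>c. Poly_Mapping.lookup \<alpha> c = card {v \<in> fst G. \<kappa> v = c}})"

definition double_star :: "nat \<Rightarrow> nat \<Rightarrow> nat sgraph" where
  "double_star n m =
     ({0..n+m+1},
      {(0, v, True) | v. v \<in> {1..n}}
      \<union> {(n+1, v, True) | v. v \<in> {n+2..n+m+1}}
      \<union> {(0, n+1, False)})"

end

theory Submission
  imports Defs
begin

definition mon :: "'v set \<Rightarrow> ('v \<Rightarrow> int) \<Rightarrow> (int \<Rightarrow>\<^sub>0 nat)" where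
  "mon V \<kappa> = (\<Sum>v\<in>V. Poly_Mapping.single (\<kappa> v) 1)"

definition fib :: "'v set \<Rightarrow> (int \<Rightarrow>\<^sub>0 nat) \<Rightarrow> ('v \<Rightarrow> int) set" where
  "fib V \<alpha> = {\<kappa> \<in> V \<rightarrow>\<^sub>E UNIV. mon V \<kappa> = \<alpha>}"

definition G :: "'v set \<Rightarrow> (('v \<Rightarrow> int) \<Rightarrow> int) \<Rightarrow> msf" where
  "G V W \<alpha> = (\<Sum>\<kappa>\<in>fib V \<alpha>. W \<kappa>)"

lemma lookup_mon: "finite V \<Longrightarrow> Poly_Mapping.lookup (mon V \<kappa>) c = card {v\<in>V. \<kappa> v = c}"
  by (simp add: mon_def lookup_sum lookup_single when_def sum.If_cases) (simp add: Int_def)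

lemma mon_eq_iff: "finite V \<Longrightarrow> mon V \<kappa> = \<alpha> \<longleftrightarrow> (\<forall>c. Poly_Mapping.lookup \<alpha> c = card {v\<in>V. \<kappa> v = c})"
  by (metis lookup_mon poly_mapping_eqI)

lemma fib_finite:
  assumes "finite V" shows "finite (fib V \<alpha>)"
proof (rule finite_subset[OF _ finite_PiE[of V "\<lambda>_. Poly_Mapping.keys \<alpha>"]])
  show "fib V \<alpha> \<subseteq> V \<rightarrow>\<^sub>E Poly_Mapping.keys \<alpha>"
  proof
    fix \<kappa> assume k: "\<kappa> \<in> fib V \<alpha>"
    have "\<kappa> v \<in> Poly_Mapping.keys \<alpha>" if "v \<in> V" for v
    proof -
      have "Poly_Mapping.lookup \<alpha> (\<kappa> v) = card {w\<in>V. \<kappa> w = \<kappa> v}"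
        using k assms by (auto simp: fib_def mon_eq_iff)
      moreover have "card {w\<in>V. \<kappa> w = \<kappa> v} > 0"
        using that assms by (subst card_gt_0_iff) auto
      ultimately show ?thesis by (simp add: in_keys_iff)
    qed
    then show "\<kappa> \<in> V \<rightarrow>\<^sub>E Poly_Mapping.keys \<alpha>" using k by (auto simp: fib_def PiE_iff)
  qed
qed (use assms in auto)

lemma finite_below: "finite {\<beta>::int \<Rightarrow>\<^sub>0 nat. \<forall>k. Poly_Mapping.lookup \<beta> k \<le> Poly_Mapping.lookup \<alpha> k}"
proof -
  let ?B = "{\<beta>::int \<Rightarrow>\<^sub>0 nat. \<forall>k. Poly_Mapping.lookup \<beta> k \<le> Poly_Mapping.lookup \<alpha> k}"
  have "inj_on (\<lambda>\<beta>. restrict (Poly_Mapping.lookup \<beta>) (Poly_Mapping.keys \<alpha>)) ?B"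
  proof (rule inj_onI)
    fix x y assume x: "x \<in> ?B" and y: "y \<in> ?B" and e: "restrict (Poly_Mapping.lookup x) (Poly_Mapping.keys \<alpha>) = restrict (Poly_Mapping.lookup y) (Poly_Mapping.keys \<alpha>)"
    show "x = y"
    proof (rule poly_mapping_eqI)
      fix k show "Poly_Mapping.lookup x k = Poly_Mapping.lookup y k"
      proof (cases "k \<in> Poly_Mapping.keys \<alpha>")
        case True then show ?thesis using fun_cong[OF e, of k] by simp
      next
        case False then have "Poly_Mapping.lookup \<alpha> k = 0" by (simp add: in_keys_iff)
        then show ?thesis using x y by (metis (mono_tags) le_zero_eq mem_Collect_eq)
      qed
    qed
  qed
  moreover have "(\<lambda>\<beta>. restrict (Poly_Mapping.lookup \<beta>) (Poly_Mapping.keys \<alpha>)) ` ?B \<subseteq> Poly_Mapping.keys \<alpha> \<rightarrow>\<^sub>E {0..Max (Poly_Mapping.lookup \<alpha> ` Poly_Mapping.keys \<alpha>)}"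
    by (auto simp: PiE_iff) (meson Max_ge dual_order.trans finite_imageI Poly_Mapping.finite_keys imageI)
  ultimately show ?thesis
    by (meson finite_PiE finite_atLeastAtMost finite_imageD Poly_Mapping.finite_keys finite_subset)
qed

lemma finite_pairs: "finite {(\<beta>::int \<Rightarrow>\<^sub>0 nat, \<gamma>). \<beta> + \<gamma> = \<alpha>}"
proof -
  let ?B = "{\<beta>::int \<Rightarrow>\<^sub>0 nat. \<forall>k. Poly_Mapping.lookup \<beta> k \<le> Poly_Mapping.lookup \<alpha> k}"
  have "{(\<beta>, \<gamma>). \<beta> + \<gamma> = \<alpha>} \<subseteq> ?B \<times> ?B"
    by (auto simp: lookup_add)
  then show ?thesis using finite_below by (meson finite_SigmaI finite_subset)
qed

lemma mon_restrict: "mon V (restrict \<kappa> V) = mon V \<kappa>"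
  unfolding mon_def by (rule sum.cong) auto

lemma mon_union: "finite V \<Longrightarrow> finite U \<Longrightarrow> V \<inter> U = {} \<Longrightarrow> mon (V \<union> U) \<kappa> = mon V \<kappa> + mon U \<kappa>"
  unfolding mon_def by (rule sum.union_disjoint)

lemma G_mult:
  assumes fV: "finite V" and fU: "finite U" and d: "V \<inter> U = {}"
  shows "msf_mult (G V W1) (G U W2) = G (V \<union> U) (\<lambda>\<kappa>. W1 (restrict \<kappa> V) * W2 (restrict \<kappa> U))"
proof
  fix \<alpha>
  let ?P = "{(\<beta>::int \<Rightarrow>\<^sub>0 nat, \<gamma>). \<beta> + \<gamma> = \<alpha>}"
  let ?Q = "{(\<kappa>1, \<kappa>2). \<kappa>1 \<in> V \<rightarrow>\<^sub>E UNIV \<and> \<kappa>2 \<in> U \<rightarrow>\<^sub>E UNIV \<and> mon V \<kappa>1 + mon U \<kappa>2 = \<alpha>}"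
  let ?g = "\<lambda>(\<kappa>1, \<kappa>2). (mon V \<kappa>1, mon U \<kappa>2)"
  let ?h = "\<lambda>(\<kappa>1, \<kappa>2). W1 \<kappa>1 * W2 \<kappa>2"
  have fQ: "finite ?Q"
  proof (rule finite_subset)
    show "?Q \<subseteq> (\<Union>(\<beta>, \<gamma>)\<in>?P. fib V \<beta> \<times> fib U \<gamma>)"
      by (auto simp: fib_def)
    show "finite (\<Union>(\<beta>, \<gamma>)\<in>?P. fib V \<beta> \<times> fib U \<gamma>)"
      using finite_pairs fib_finite fV fU by (auto intro!: finite_UN_I)
  qed
  have "msf_mult (G V W1) (G U W2) \<alpha> = (\<Sum>(\<beta>, \<gamma>)\<in>?P. G V W1 \<beta> * G U W2 \<gamma>)"
    by (simp add: msf_mult_def)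
  also have "\<dots> = (\<Sum>y\<in>?P. sum ?h {x \<in> ?Q. ?g x = y})"
  proof (rule sum.cong[OF refl])
    fix y assume "y \<in> ?P"
    obtain \<beta> \<gamma> where y: "y = (\<beta>, \<gamma>)" and e: "\<beta> + \<gamma> = \<alpha>" using \<open>y \<in> ?P\<close> by auto
    have "{x \<in> ?Q. ?g x = y} = fib V \<beta> \<times> fib U \<gamma>"
      using e by (auto simp: y fib_def)
    then show "(case y of (\<beta>, \<gamma>) \<Rightarrow> G V W1 \<beta> * G U W2 \<gamma>) = sum ?h {x \<in> ?Q. ?g x = y}"
      by (simp add: y G_def sum_product sum.cartesian_product)
  qed
  also have "\<dots> = sum ?h ?Q"
    by (rule sum.group[OF fQ finite_pairs]) auto
  also have "\<dots> = (\<Sum>\<kappa>\<in>fib (V \<union> U) \<alpha>. ?h (restrict \<kappa> V, restrict \<kappa> U))"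
  proof (rule sum.reindex_bij_betw[symmetric])
    show "bij_betw (\<lambda>\<kappa>. (restrict \<kappa> V, restrict \<kappa> U)) (fib (V \<union> U) \<alpha>) ?Q"
    proof (rule bij_betwI[where g = "\<lambda>(\<kappa>1, \<kappa>2). (\<lambda>v. if v \<in> V then \<kappa>1 v else if v \<in> U then \<kappa>2 v else undefined)"])
      show "(\<lambda>\<kappa>. (restrict \<kappa> V, restrict \<kappa> U)) \<in> fib (V \<union> U) \<alpha> \<rightarrow> ?Q"
        using fV fU d by (auto simp: fib_def mon_restrict mon_union)
      show "(\<lambda>(\<kappa>1, \<kappa>2). (\<lambda>v. if v \<in> V then \<kappa>1 v else if v \<in> U then \<kappa>2 v else undefined)) \<in> ?Q \<rightarrow> fib (V \<union> U) \<alpha>"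
      proof (rule Pi_I)
        fix y assume "y \<in> ?Q"
        then obtain \<kappa>1 \<kappa>2 where y: "y = (\<kappa>1, \<kappa>2)" and a: "(\<kappa>1, \<kappa>2) \<in> ?Q" by auto
        let ?k = "\<lambda>v. if v \<in> V then \<kappa>1 v else if v \<in> U then \<kappa>2 v else undefined"
        have "mon V ?k = mon V \<kappa>1" unfolding mon_def by (rule sum.cong) auto
        moreover have "mon U ?k = mon U \<kappa>2" unfolding mon_def using d by (intro sum.cong) auto
        ultimately have "?k \<in> fib (V \<union> U) \<alpha>"
          using a fV fU d by (auto simp: fib_def mon_union PiE_iff extensional_def)
        then show "(case y of (\<kappa>1, \<kappa>2) \<Rightarrow> (\<lambda>v. if v \<in> V then \<kappa>1 v else if v \<in> U then \<kappa>2 v else undefined)) \<in> fib (V \<union> U) \<alpha>"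
          by (simp add: y)
      qed
      show "\<And>x. x \<in> fib (V \<union> U) \<alpha> \<Longrightarrow> (case (restrict x V, restrict x U) of (\<kappa>1, \<kappa>2) \<Rightarrow> (\<lambda>v. if v \<in> V then \<kappa>1 v else if v \<in> U then \<kappa>2 v else undefined)) = x"
        by (auto simp: fib_def PiE_iff extensional_def)
      show "\<And>y. y \<in> ?Q \<Longrightarrow> (restrict ((case y of (\<kappa>1, \<kappa>2) \<Rightarrow> (\<lambda>v. if v \<in> V then \<kappa>1 v else if v \<in> U then \<kappa>2 v else undefined))) V,
                  restrict ((case y of (\<kappa>1, \<kappa>2) \<Rightarrow> (\<lambda>v. if v \<in> V then \<kappa>1 v else if v \<in> U then \<kappa>2 v else undefined))) U) = y"
        using d by (auto simp: PiE_iff extensional_def restrict_def fun_eq_iff)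
    qed
  qed
  also have "\<dots> = G (V \<union> U) (\<lambda>\<kappa>. W1 (restrict \<kappa> V) * W2 (restrict \<kappa> U)) \<alpha>"
    by (simp add: G_def)
  finally show "msf_mult (G V W1) (G U W2) \<alpha> = G (V \<union> U) (\<lambda>\<kappa>. W1 (restrict \<kappa> V) * W2 (restrict \<kappa> U)) \<alpha>" .
qed


lemma sum_of_bool_card: "finite S \<Longrightarrow> (\<Sum>x\<in>S. (of_bool (P x) :: int)) = int (card {x\<in>S. P x})"
  by (simp add: sum.If_cases Int_def)

lemma G_cong: "(\<And>\<kappa>. \<kappa> \<in> V \<rightarrow>\<^sub>E UNIV \<Longrightarrow> W \<kappa> = W' \<kappa>) \<Longrightarrow> G V W = G V W'"
  unfolding G_def fib_def by (intro ext sum.cong) auto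

lemma G_sum: "G V (\<lambda>\<kappa>. \<Sum>x\<in>X. W x \<kappa>) \<alpha> = (\<Sum>x\<in>X. G V (W x) \<alpha>)"
  unfolding G_def by (rule sum.swap)

lemma G_cmult: "G V (\<lambda>\<kappa>. c * W \<kappa>) \<alpha> = c * G V W \<alpha>"
  unfolding G_def by (simp add: sum_distrib_left)

lemma G_diff: "G V (\<lambda>\<kappa>. W1 \<kappa> - W2 \<kappa>) \<alpha> = G V W1 \<alpha> - G V W2 \<alpha>"
  unfolding G_def by (simp add: sum_subtractf)

lemma G_pab:
  assumes fA: "finite A" and fB: "finite B" and d: "A \<inter> B = {}" and a: "a \<in> A"
  shows "G (A \<union> B) (\<lambda>\<kappa>. of_bool (\<forall>v\<in>A. \<kappa> v = \<kappa> a) * of_bool (\<forall>v\<in>B. \<kappa> v = - \<kappa> a)) = pab (card A) (card B)"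
proof
  fix \<alpha>
  let ?P = "\<lambda>\<kappa>. (\<forall>v\<in>A. \<kappa> v = \<kappa> a) \<and> (\<forall>v\<in>B. \<kappa> v = - \<kappa> a)"
  let ?C = "{c::int. \<alpha> = Poly_Mapping.single c (card A) + Poly_Mapping.single (- c) (card B)}"
  define kc where "kc c = (\<lambda>v. if v \<in> A then c else if v \<in> B then - c else (undefined::int))" for c
  have fAB: "finite (A \<union> B)" using fA fB by simp
  have mon_kc: "mon (A \<union> B) (kc c) = Poly_Mapping.single c (card A) + Poly_Mapping.single (- c) (card B)" for c
  proof (rule poly_mapping_eqI)
    fix c'
    have "{v \<in> A \<union> B. kc c v = c'} = (if c = c' then A else {}) \<union> (if - c = c' then B else {})"
      using d by (auto simp: kc_def)
    then have "card {v \<in> A \<union> B. kc c v = c'} = (if c = c' then card A else 0) + (if - c = c' then card B else 0)"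
      using d fA fB by (simp add: card_Un_disjoint)
    then show "Poly_Mapping.lookup (mon (A \<union> B) (kc c)) c' = Poly_Mapping.lookup (Poly_Mapping.single c (card A) + Poly_Mapping.single (- c) (card B)) c'"
      using fAB by (simp add: lookup_mon lookup_add lookup_single when_def)
  qed
  have "G (A \<union> B) (\<lambda>\<kappa>. of_bool (\<forall>v\<in>A. \<kappa> v = \<kappa> a) * of_bool (\<forall>v\<in>B. \<kappa> v = - \<kappa> a)) \<alpha>
      = (\<Sum>\<kappa>\<in>fib (A \<union> B) \<alpha>. of_bool (?P \<kappa>))"
    unfolding G_def by (simp only: of_bool_conj)
  also have "\<dots> = int (card {\<kappa> \<in> fib (A \<union> B) \<alpha>. ?P \<kappa>})"
    by (rule sum_of_bool_card[OF fib_finite[OF fAB]])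
  also have "card {\<kappa> \<in> fib (A \<union> B) \<alpha>. ?P \<kappa>} = card ?C"
  proof (rule bij_betw_same_card[symmetric], rule bij_betwI[where g = "\<lambda>\<kappa>. \<kappa> a"])
    show "kc \<in> ?C \<rightarrow> {\<kappa> \<in> fib (A \<union> B) \<alpha>. ?P \<kappa>}"
      using a d by (auto simp: fib_def mon_kc) (auto simp: kc_def)
    show "(\<lambda>\<kappa>. \<kappa> a) \<in> {\<kappa> \<in> fib (A \<union> B) \<alpha>. ?P \<kappa>} \<rightarrow> ?C"
    proof
      fix \<kappa> assume k: "\<kappa> \<in> {\<kappa> \<in> fib (A \<union> B) \<alpha>. ?P \<kappa>}"
      then have "\<kappa> = kc (\<kappa> a)"
        using d by (auto simp: fib_def kc_def PiE_iff extensional_def fun_eq_iff)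
      then have "mon (A \<union> B) \<kappa> = mon (A \<union> B) (kc (\<kappa> a))" by simp
      then show "\<kappa> a \<in> ?C" using k by (simp add: fib_def mon_kc)
    qed
    show "\<And>c. c \<in> ?C \<Longrightarrow> kc c a = c" using a by (simp add: kc_def)
    show "\<And>\<kappa>. \<kappa> \<in> {\<kappa> \<in> fib (A \<union> B) \<alpha>. ?P \<kappa>} \<Longrightarrow> kc (\<kappa> a) = \<kappa>"
      using d by (auto simp: fib_def kc_def PiE_iff extensional_def fun_eq_iff)
  qed
  finally show "G (A \<union> B) (\<lambda>\<kappa>. of_bool (\<forall>v\<in>A. \<kappa> v = \<kappa> a) * of_bool (\<forall>v\<in>B. \<kappa> v = - \<kappa> a)) \<alpha> = pab (card A) (card B) \<alpha>"
    by (simp add: pab_def)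
qed

lemma G_empty: "G ({}::'v set) (\<lambda>_. 1) = msf_one"
proof
  fix \<alpha>
  have e0: "fib ({}::'v set) 0 = {\<lambda>_. undefined}"
    by (auto simp: fib_def mon_def)
  have ne: "\<alpha> \<noteq> 0 \<Longrightarrow> fib ({}::'v set) \<alpha> = {}"
    by (auto simp: fib_def mon_def)
  show "G ({}::'v set) (\<lambda>_. 1) \<alpha> = msf_one \<alpha>"
    unfolding G_def msf_one_def using e0 ne by (cases "\<alpha> = 0") simp_all
qed

lemma pab10: "pab 1 0 = G {x} (\<lambda>_. 1)"
  using G_pab[of "{x}" "{}" x] by simp

lemma G_pow: "finite V \<Longrightarrow> msf_pow (pab 1 0) (card V) = G V (\<lambda>_. 1)"
proof (induction V rule: finite_induct)
  case empty then show ?case by (simp add: G_empty)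
next
  case (insert x F)
  have "msf_pow (pab 1 0) (card (insert x F)) = msf_mult (pab 1 0) (msf_pow (pab 1 0) (card F))"
    using insert by simp
  also have "\<dots> = msf_mult (G {x} (\<lambda>_. 1)) (G F (\<lambda>_. 1))"
    by (simp only: insert.IH) (simp only: pab10[of x])
  also have "\<dots> = G ({x} \<union> F) (\<lambda>_. 1)"
    using insert by (subst G_mult) auto
  finally show ?case by simp
qed

lemma chrom_G: "finite (fst Gr) \<Longrightarrow> chrom_sym Gr = G (fst Gr) (\<lambda>\<kappa>. of_bool (proper_col Gr \<kappa>))"
proof
  fix \<alpha> assume f: "finite (fst Gr)"
  have "G (fst Gr) (\<lambda>\<kappa>. of_bool (proper_col Gr \<kappa>)) \<alpha> = int (card {\<kappa> \<in> fib (fst Gr) \<alpha>. proper_col Gr \<kappa>})"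
    unfolding G_def by (rule sum_of_bool_card[OF fib_finite[OF f]])
  also have "{\<kappa> \<in> fib (fst Gr) \<alpha>. proper_col Gr \<kappa>} = {\<kappa> \<in> proper_colorings Gr.
        \<forall>c. Poly_Mapping.lookup \<alpha> c = card {v \<in> fst Gr. \<kappa> v = c}}"
    using f by (auto simp: fib_def proper_colorings_def mon_eq_iff)
  finally show "chrom_sym Gr \<alpha> = G (fst Gr) (\<lambda>\<kappa>. of_bool (proper_col Gr \<kappa>)) \<alpha>"
    by (simp add: chrom_sym_def)
qed




lemma prod_of_bool_int: "finite X \<Longrightarrow> (\<Prod>l\<in>X. (of_bool (Q l) :: int)) = of_bool (\<forall>l\<in>X. Q l)"
  by (induction X rule: finite_induct) auto

lemma incl_excl:
  assumes "finite L"
  shows "(of_bool (\<forall>l\<in>L. \<not> Q l) :: int) = (\<Sum>X\<in>Pow L. (-1) ^ card X * of_bool (\<forall>l\<in>X. Q l))"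
proof -
  have "(of_bool (\<forall>l\<in>L. \<not> Q l) :: int) = (\<Prod>l\<in>L. 1 - of_bool (Q l))"
    using prod_of_bool_int[OF assms, of "\<lambda>l. \<not> Q l"] by (simp add: of_bool_not_iff)
  also have "\<dots> = (\<Sum>X\<in>Pow L. (-1) ^ card X * (\<Prod>l\<in>X. of_bool (Q l)) * (\<Prod>l\<in>L-X. 1))"
    by (rule prod_diff_conv_sum[OF assms])
  also have "\<dots> = (\<Sum>X\<in>Pow L. (-1) ^ card X * of_bool (\<forall>l\<in>X. Q l))"
    using assms by (intro sum.cong refl) (auto simp: prod_of_bool_int finite_subset)
  finally show ?thesis .
qed

lemma count_subsets:
  fixes f :: "nat \<Rightarrow> int"
  assumes "finite L"
  shows "(\<Sum>I\<in>Pow L. f (card I)) = (\<Sum>i=0..card L. of_nat (card L choose i) * f i)"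
proof -
  have "(\<Sum>I\<in>Pow L. f (card I)) = (\<Sum>i\<in>{0..card L}. \<Sum>I\<in>{I \<in> Pow L. card I = i}. f (card I))"
    using assms by (intro sum.group[symmetric]) (auto intro: card_mono)
  also have "\<dots> = (\<Sum>i=0..card L. of_nat (card L choose i) * f i)"
  proof (rule sum.cong[OF refl])
    fix i
    have "{I \<in> Pow L. card I = i} = {I. I \<subseteq> L \<and> card I = i}" by auto
    then show "(\<Sum>I\<in>{I \<in> Pow L. card I = i}. f (card I)) = of_nat (card L choose i) * f i"
      using n_subsets[OF assms, of i] by simp
  qed
  finally show ?thesis .
qed

lemma ball_setcompr: "(\<forall>x\<in>{f v |v. v \<in> S}. Q x) \<longleftrightarrow> (\<forall>v\<in>S. Q (f v))"
  by blast

lemma proper_iff: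
  "proper_col (double_star n m) \<kappa> \<longleftrightarrow>
     (\<forall>l\<in>{1..n}. \<not> \<kappa> l = \<kappa> 0) \<and> (\<forall>l\<in>{n+2..n+m+1}. \<not> \<kappa> l = \<kappa> (n+1)) \<and> \<kappa> 0 \<noteq> - \<kappa> (n+1)"
  unfolding proper_col_def double_star_def snd_conv ball_Un ball_setcompr by auto

definition WW :: "nat \<Rightarrow> nat set \<Rightarrow> nat set \<Rightarrow> (nat \<Rightarrow> int) \<Rightarrow> int" where
  "WW n I J \<kappa> = of_bool (\<forall>l\<in>I. \<kappa> l = \<kappa> 0) * of_bool (\<forall>l\<in>J. \<kappa> l = \<kappa> (n+1)) * of_bool (\<kappa> 0 \<noteq> - \<kappa> (n+1))"

lemma expand:
  "(of_bool (proper_col (double_star n m) \<kappa>) :: int) =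
     (\<Sum>I\<in>Pow {1..n}. \<Sum>J\<in>Pow {n+2..n+m+1}. (-1) ^ (card I + card J) * WW n I J \<kappa>)"
proof -
  have "(of_bool (proper_col (double_star n m) \<kappa>) :: int) =
     of_bool (\<forall>l\<in>{1..n}. \<not> \<kappa> l = \<kappa> 0) * of_bool (\<forall>l\<in>{n+2..n+m+1}. \<not> \<kappa> l = \<kappa> (n+1)) * of_bool (\<kappa> 0 \<noteq> - \<kappa> (n+1))"
    by (simp add: proper_iff)
  also have "\<dots> = (\<Sum>I\<in>Pow {1..n}. (-1) ^ card I * of_bool (\<forall>l\<in>I. \<kappa> l = \<kappa> 0)) *
      (\<Sum>J\<in>Pow {n+2..n+m+1}. (-1) ^ card J * of_bool (\<forall>l\<in>J. \<kappa> l = \<kappa> (n+1))) * of_bool (\<kappa> 0 \<noteq> - \<kappa> (n+1))"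
    by (simp only: incl_excl[of "{1..n}"] incl_excl[of "{n+2..n+m+1}"] finite_atLeastAtMost)
  also have "\<dots> = (\<Sum>I\<in>Pow {1..n}. \<Sum>J\<in>Pow {n+2..n+m+1}. (-1) ^ (card I + card J) * WW n I J \<kappa>)"
    by (subst sum_product, simp only: sum_distrib_right) (rule sum.cong[OF refl], rule sum.cong[OF refl], simp only: WW_def power_add mult_ac)
  finally show ?thesis .
qed


definition Term :: "nat \<Rightarrow> nat \<Rightarrow> nat \<Rightarrow> nat \<Rightarrow> msf" where
  "Term n m i j = msf_mult (msf_pow (pab 1 0) (n + m - i - j))
         (\<lambda>\<beta>. msf_mult (pab (i+1) 0) (pab (j+1) 0) \<beta> - pab (i+1) (j+1) \<beta>)"

lemma key:
  assumes I: "I \<subseteq> {1..n}" and J: "J \<subseteq> {n+2..n+m+1}"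
  shows "G {0..n+m+1} (WW n I J) = Term n m (card I) (card J)"
proof -
  define A where "A = insert 0 I"
  define B where "B = insert (n+1) J"
  define T where "T = A \<union> B"
  define R where "R = {0..n+m+1} - T"
  have fI: "finite I" using I finite_subset by blast
  have fJ: "finite J" using J finite_subset by blast
  have fA: "finite A" and fB: "finite B" using fI fJ by (auto simp: A_def B_def)
  have dIJ: "I \<inter> J = {}" using I J by fastforce
  have dAB: "A \<inter> B = {}" using I J dIJ by (auto simp: A_def B_def)
  have n0: "0 \<notin> I" using I by auto
  have n1: "n+1 \<notin> J" using J by auto
  have cA: "card A = card I + 1" using n0 fI by (simp add: A_def)
  have cB: "card B = card J + 1" using n1 fJ by (simp add: B_def)
  have TV: "T \<subseteq> {0..n+m+1}" using I J by (auto simp: T_def A_def B_def)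
  have cT: "card T = card I + card J + 2" using cA cB dAB fA fB by (simp add: T_def card_Un_disjoint)
  have cR: "card R = n + m - card I - card J"
    using card_Diff_subset[OF finite_subset[OF TV] TV] cT by (simp add: R_def)
  have fT: "finite T" and fR: "finite R" using fA fB by (auto simp: T_def R_def)
  have VRT: "{0..n+m+1} = R \<union> T" and dRT: "R \<inter> T = {}" using TV by (auto simp: R_def)
  have "G {0..n+m+1} (WW n I J) = G (R \<union> T) (\<lambda>\<kappa>. (\<lambda>_. 1) (restrict \<kappa> R) * WW n I J (restrict \<kappa> T))"
  proof -
    have "WW n I J \<kappa> = WW n I J (restrict \<kappa> T)" for \<kappa>
    proof -
      have "0 \<in> T" "n+1 \<in> T" "I \<subseteq> T" "J \<subseteq> T" by (auto simp: T_def A_def B_def)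
      then show ?thesis unfolding WW_def by (auto simp: subset_iff)
    qed
    then show ?thesis using VRT by simp
  qed
  also have "\<dots> = msf_mult (G R (\<lambda>_. 1)) (G T (WW n I J))"
    by (rule G_mult[symmetric, OF fR fT dRT])
  also have "G R (\<lambda>_. 1) = msf_pow (pab 1 0) (n + m - card I - card J)"
    using G_pow[OF fR] cR by simp
  also have "G T (WW n I J) = (\<lambda>\<beta>. msf_mult (pab (card I+1) 0) (pab (card J+1) 0) \<beta> - pab (card I+1) (card J+1) \<beta>)"
  proof
    fix \<beta>
    let ?X1 = "\<lambda>\<kappa>. of_bool (\<forall>v\<in>A. \<kappa> v = \<kappa> 0) * of_bool (\<forall>v\<in>B. \<kappa> v = \<kappa> (n+1)) :: int"
    let ?X2 = "\<lambda>\<kappa>. of_bool (\<forall>v\<in>A. \<kappa> v = \<kappa> 0) * of_bool (\<forall>v\<in>B. \<kappa> v = - \<kappa> 0) :: int"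
    have WX: "WW n I J \<kappa> = ?X1 \<kappa> - ?X2 \<kappa>" for \<kappa>
      by (cases "\<kappa> 0 = - \<kappa> (n+1)") (auto simp: WW_def A_def B_def)
    have X1: "G T ?X1 = msf_mult (pab (card I+1) 0) (pab (card J+1) 0)"
    proof -
      have "G A (\<lambda>\<kappa>. of_bool (\<forall>v\<in>A. \<kappa> v = \<kappa> 0)) = pab (card I + 1) 0"
        using G_pab[OF fA finite.emptyI, of 0] cA by (simp add: A_def)
      moreover have "G B (\<lambda>\<kappa>. of_bool (\<forall>v\<in>B. \<kappa> v = \<kappa> (n+1))) = pab (card J + 1) 0"
        using G_pab[OF fB finite.emptyI, of "n+1"] cB by (simp add: B_def)
      moreover have "msf_mult (G A (\<lambda>\<kappa>. of_bool (\<forall>v\<in>A. \<kappa> v = \<kappa> 0))) (G B (\<lambda>\<kappa>. of_bool (\<forall>v\<in>B. \<kappa> v = \<kappa> (n+1))))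
          = G T ?X1"
        unfolding T_def by (subst G_mult[OF fA fB dAB]) (auto simp: A_def B_def intro!: arg_cong[where f = "G _"])
      ultimately show ?thesis by simp
    qed
    have X2: "G T ?X2 = pab (card I+1) (card J+1)"
      using G_pab[OF fA fB dAB, of 0] cA cB by (simp add: T_def A_def)
    show "G T (WW n I J) \<beta> = msf_mult (pab (card I+1) 0) (pab (card J+1) 0) \<beta> - pab (card I+1) (card J+1) \<beta>"
    proof -
      have WXe: "WW n I J = (\<lambda>\<kappa>. ?X1 \<kappa> - ?X2 \<kappa>)" using WX by (intro ext)
      show ?thesis unfolding WXe G_diff X1 X2 ..
    qed
  qed
  finally show ?thesis by (simp add: Term_def)
qed

theorem lemma6p6:
  fixes n m :: nat
  shows "chrom_sym (double_star n m) =
    (\<lambda>\<alpha>. \<Sum>i=0..n. \<Sum>j=0..m.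
       of_nat (n choose i) * of_nat (m choose j) * (-1) ^ (i + j) *
       msf_mult (msf_pow (pab 1 0) (n + m - i - j))
         (\<lambda>\<beta>. msf_mult (pab (i+1) 0) (pab (j+1) 0) \<beta> - pab (i+1) (j+1) \<beta>) \<alpha>)"
proof
  fix \<alpha>
  have f: "finite (fst (double_star n m))" by (simp add: double_star_def)
  have V: "fst (double_star n m) = {0..n+m+1}" by (simp add: double_star_def)
  have "chrom_sym (double_star n m) \<alpha> = G {0..n+m+1} (\<lambda>\<kappa>. of_bool (proper_col (double_star n m) \<kappa>)) \<alpha>"
    using chrom_G[OF f] V by simp
  also have "\<dots> = G {0..n+m+1} (\<lambda>\<kappa>. \<Sum>I\<in>Pow {1..n}. \<Sum>J\<in>Pow {n+2..n+m+1}. (-1) ^ (card I + card J) * WW n I J \<kappa>) \<alpha>"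
    by (simp only: expand)
  also have "\<dots> = (\<Sum>I\<in>Pow {1..n}. \<Sum>J\<in>Pow {n+2..n+m+1}. (-1) ^ (card I + card J) * G {0..n+m+1} (WW n I J) \<alpha>)"
    by (simp only: G_sum G_cmult)
  also have "\<dots> = (\<Sum>I\<in>Pow {1..n}. \<Sum>J\<in>Pow {n+2..n+m+1}. (-1) ^ (card I + card J) * Term n m (card I) (card J) \<alpha>)"
    by (intro sum.cong refl) (metis PowD key)
  also have "\<dots> = (\<Sum>I\<in>Pow {1..n}. \<Sum>j=0..m. of_nat (m choose j) * ((-1) ^ (card I + j) * Term n m (card I) j \<alpha>))"
    using count_subsets[of "{n+2..n+m+1}" "\<lambda>j. (-1) ^ (card _ + j) * Term n m (card _) j \<alpha>"]
    by (intro sum.cong refl) (simp add: count_subsets[of "{n+2..n+m+1}"])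
  also have "\<dots> = (\<Sum>i=0..n. of_nat (n choose i) * (\<Sum>j=0..m. of_nat (m choose j) * ((-1) ^ (i + j) * Term n m i j \<alpha>)))"
    using count_subsets[of "{1..n}" "\<lambda>i. \<Sum>j=0..m. of_nat (m choose j) * ((-1) ^ (i + j) * Term n m i j \<alpha>)"] by simp
  also have "\<dots> = (\<Sum>i=0..n. \<Sum>j=0..m.
       of_nat (n choose i) * of_nat (m choose j) * (-1) ^ (i + j) *
       msf_mult (msf_pow (pab 1 0) (n + m - i - j))
         (\<lambda>\<beta>. msf_mult (pab (i+1) 0) (pab (j+1) 0) \<beta> - pab (i+1) (j+1) \<beta>) \<alpha>)"
    by (simp add: sum_distrib_left Term_def mult_ac)
  finally show "chrom_sym (double_star n m) \<alpha> = (\<Sum>i=0..n. \<Sum>j=0..m.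
       of_nat (n choose i) * of_nat (m choose j) * (-1) ^ (i + j) *
       msf_mult (msf_pow (pab 1 0) (n + m - i - j))
         (\<lambda>\<beta>. msf_mult (pab (i+1) 0) (pab (j+1) 0) \<beta> - pab (i+1) (j+1) \<beta>) \<alpha>)" .
qed

end
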